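(* Let $u_1=(1,0)$, $u_2=(0,1)$, $u_3=(1,1)$ in $\mathbb{Z}^2$, $S=\{\pm u_1,\pm u_2,\pm u_3\}$, and $\mathcal{P}=\{P_\alpha\}_{\alpha\in S}$ on $\mathbb{C}^6$ with $P_{u_i}=P_{2i-1}$, $P_{-u_i}=P_{2i}$ ($i=1,2,3$). Then $U(S,\mathcal{P},G_6)$ acting on $\ell^2(\mathbb{Z}^2,\mathbb{C}^6)$ has both $1$ and $-1$ as eigenvalues.
   Context: $P_j$ is the orthogonal projection of $\mathbb{C}^6$ onto $\mathbb{C}\mathbf{e}_j$, $\mathbf{e}_j$ the standard basis. $(\tau^\alpha f)(x)=f(x-\alpha)$, $U(S,\mathcal{P},C)=\big(\sum_{\alpha\in S}\tau^\alpha P_\alpha\big)C$ with $C$ acting pointwise. $G_6=\frac26J-I$, $J$ the $6\times6$ all-ones matrix. Eigenvalue means point spectrum. *)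

theory Defs
  imports "HOL-Analysis.Analysis"
begin

definition l2 :: "(int \<times> int \<Rightarrow> complex^6) \<Rightarrow> bool" where
  "l2 f \<longleftrightarrow> (\<lambda>x. (norm (f x))\<^sup>2) summable_on UNIV"

definition shift :: "int \<times> int \<Rightarrow> (int \<times> int \<Rightarrow> 'a) \<Rightarrow> (int \<times> int \<Rightarrow> 'a)" where
  "shift \<alpha> f = (\<lambda>x. f (x - \<alpha>))"

definition projP :: "6 \<Rightarrow> complex^6^6" where
  "projP j = (\<chi> a b. if a = j \<and> b = j then 1 else 0)"

definition Uop :: "(int \<times> int) set \<Rightarrow> (int \<times> int \<Rightarrow> complex^6^6) \<Rightarrow> complex^6^6
    \<Rightarrow> (int \<times> int \<Rightarrow> complex^6) \<Rightarrow> (int \<times> int \<Rightarrow> complex^6)" where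
  "Uop S P C f = (\<lambda>x. \<Sum>\<alpha>\<in>S. shift \<alpha> (\<lambda>y. P \<alpha> *v (C *v f y)) x)"

definition G6 :: "complex^6^6" where
  "G6 = (\<chi> a b. 2/6) - mat 1"

definition is_eigenvalue :: "((int \<times> int \<Rightarrow> complex^6) \<Rightarrow> (int \<times> int \<Rightarrow> complex^6)) \<Rightarrow> complex \<Rightarrow> bool" where
  "is_eigenvalue T c \<longleftrightarrow> (\<exists>f. l2 f \<and> f \<noteq> (\<lambda>x. 0) \<and> T f = (\<lambda>x. c *s f x))"

definition u1 :: "int \<times> int" where "u1 = (1, 0)"
definition u2 :: "int \<times> int" where "u2 = (0, 1)"
definition u3 :: "int \<times> int" where "u3 = (1, 1)"

definition S6 :: "(int \<times> int) set" where
  "S6 = {u1, -u1, u2, -u2, u3, -u3}"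

text \<open>P_{u_i} = P_{2i-1}, P_{-u_i} = P_{2i}; components of 6 are indexed 1..6 (6 = 0 in the numeral type).\<close>
definition Pfam :: "int \<times> int \<Rightarrow> complex^6^6" where
  "Pfam \<alpha> = (if \<alpha> = u1 then projP 1 else if \<alpha> = -u1 then projP 2
     else if \<alpha> = u2 then projP 3 else if \<alpha> = -u2 then projP 4
     else if \<alpha> = u3 then projP 5 else if \<alpha> = -u3 then projP 6 else 0)"

end

theory Submission
  imports Defs
begin

lemma exhaust_6:
  fixes x :: 6
  shows "x = 1 \<or> x = 2 \<or> x = 3 \<or> x = 4 \<or> x = 5 \<or> x = 6"
proof (induct x)
  case (of_int z)
  then have "z = 0 \<or> z = 1 \<or> z = 2 \<or> z = 3 \<or> z = 4 \<or> z = 5" by fastforce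
  then show ?case by auto
qed

lemma UNIV_6: "(UNIV::6 set) = {1,2,3,4,5,6}"
proof -
  have "x \<in> {1,2,3,4,5,6}" for x :: 6
    using exhaust_6[of x] by blast
  then show ?thesis by blast
qed

lemma sum_6: "sum f (UNIV::6 set) = f 1 + f 2 + f 3 + f 4 + f 5 + f 6"
  unfolding UNIV_6 by (simp add: add.assoc)

definition dv :: "6 \<Rightarrow> int \<times> int" where
  "dv j = (if j = 1 then u1 else if j = 2 then -u1 else if j = 3 then u2 else if j = 4 then -u2
     else if j = 5 then u3 else -u3)"

lemma projP_apply: "(projP i *v w) $ j = (if i = j then w $ j else 0)"
proof -
  have "(projP i *v w) $ j = (\<Sum>k\<in>UNIV. if k = j then (if i = j then w $ j else 0) else 0)"
  proof -
    have "\<And>k. (projP i) $ j $ k * w $ k = (if k = j then (if i = j then w $ j else 0) else 0)"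
      by (simp add: projP_def)
    then show ?thesis unfolding matrix_vector_mult_def by simp
  qed
  then show ?thesis by simp
qed

lemma Pfam_apply: "\<alpha> \<in> S6 \<Longrightarrow> (Pfam \<alpha> *v w) $ j = (if \<alpha> = dv j then w $ j else 0)"
  using exhaust_6[of j]
  by (auto simp: S6_def Pfam_def dv_def u1_def u2_def u3_def projP_apply)

lemma Ucomp: "(Uop S6 Pfam G6 f x) $ j = (G6 *v f (x - dv j)) $ j"
proof -
  have "(Uop S6 Pfam G6 f x) $ j = (\<Sum>\<alpha>\<in>S6. (Pfam \<alpha> *v (G6 *v f (x - \<alpha>))) $ j)"
    by (simp add: Uop_def shift_def sum_component)
  also have "\<dots> = (\<Sum>\<alpha>\<in>S6. if \<alpha> = dv j then (G6 *v f (x - \<alpha>)) $ j else 0)"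
    by (rule sum.cong) (auto simp: Pfam_apply)
  also have "\<dots> = (G6 *v f (x - dv j)) $ j"
  proof -
    have "dv j \<in> S6" using exhaust_6[of j] by (auto simp: dv_def S6_def)
    moreover have "finite S6" by (simp add: S6_def)
    ultimately show ?thesis by (simp add: sum.delta')
  qed
  finally show ?thesis .
qed

lemma G6_apply: "(G6 *v v) $ j = (\<Sum>k\<in>UNIV. (2/6) * v $ k) - v $ j"
proof -
  have "(G6 *v v) $ j = (\<Sum>k\<in>UNIV. (2/6) * v $ k - (if k = j then v $ j else 0))"
    unfolding G6_def matrix_vector_mult_def mat_def by (auto intro!: sum.cong simp: algebra_simps)
  also have "\<dots> = (\<Sum>k\<in>UNIV. (2/6) * v $ k) - v $ j"
    by (simp add: sum_subtractf)
  finally show ?thesis .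
qed

lemma eig_crit:
  assumes "\<And>a b j. (G6 *v f ((a,b) - dv j)) $ j = c * f (a,b) $ j"
  shows "Uop S6 Pfam G6 f = (\<lambda>x. c *s f x)"
proof (rule ext)
  fix x :: "int \<times> int"
  obtain a b where x: "x = (a,b)" by (cases x)
  show "Uop S6 Pfam G6 f x = c *s f x"
    unfolding vec_eq_iff using assms x by (simp add: Ucomp)
qed

lemma l2_fin:
  assumes "\<And>a b. f (a,b) \<noteq> 0 \<Longrightarrow> a \<in> {0..2} \<and> b \<in> {0..2}"
  shows "l2 f"
  unfolding l2_def
proof (rule finite_nonzero_values_imp_summable_on)
  have "{x \<in> UNIV. (norm (f x))\<^sup>2 \<noteq> 0} \<subseteq> {0..2} \<times> {0..2}"
    using assms by auto
  then show "finite {x \<in> UNIV. (norm (f x))\<^sup>2 \<noteq> 0}"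
    by (rule finite_subset) auto
qed

definition idx :: "6 \<Rightarrow> nat" where
  "idx j = (if j = 1 then 0 else if j = 2 then 1 else if j = 3 then 2 else if j = 4 then 3
     else if j = 5 then 4 else 5)"

lemma idx_vals: "idx 1 = 0" "idx 2 = 1" "idx 3 = 2" "idx 4 = 3" "idx 5 = 4" "idx 6 = 5"
  by (simp_all add: idx_def)

definition dx :: "nat \<Rightarrow> int" where "dx k = [1,-1,0,0,1,-1] ! k"
definition dy :: "nat \<Rightarrow> int" where "dy k = [0,0,1,-1,1,-1] ! k"

lemma idx_lt: "idx j < 6"
  by (simp add: idx_def)

lemma dv_idx: "dv j = (dx (idx j), dy (idx j))"
  using exhaust_6[of j]
  by (auto simp: dv_def idx_vals dx_def dy_def u1_def u2_def u3_def)

definition FH :: "(int \<Rightarrow> int \<Rightarrow> nat \<Rightarrow> int) \<Rightarrow> int \<times> int \<Rightarrow> complex^6" where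
  "FH H x = (\<chi> j. of_int (H (fst x) (snd x) (idx j)))"

lemma G6_FH: "(G6 *v FH H y) $ j =
   of_int (H (fst y) (snd y) 0 + H (fst y) (snd y) 1 + H (fst y) (snd y) 2 + H (fst y) (snd y) 3
    + H (fst y) (snd y) 4 + H (fst y) (snd y) 5 - 3 * H (fst y) (snd y) (idx j)) / 3"
  by (simp add: G6_apply sum_6 FH_def idx_vals field_simps)

lemma eig_H:
  fixes c :: int
  assumes "\<And>a b k. k < 6 \<Longrightarrow>
    (let a' = a - dx k; b' = b - dy k in H a' b' 0 + H a' b' 1 + H a' b' 2 + H a' b' 3 + H a' b' 4
      + H a' b' 5 - 3 * H a' b' k) = 3 * c * H a b k"
  shows "Uop S6 Pfam G6 (FH H) = (\<lambda>x. of_int c *s FH H x)"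
proof (rule eig_crit)
  fix a b j
  have "(G6 *v FH H ((a, b) - dv j)) $ j = of_int (3 * c * H a b (idx j)) / 3"
    using assms[OF idx_lt[of j], of a b] by (simp add: G6_FH dv_idx Let_def)
  also have "\<dots> = of_int c * FH H (a, b) $ j"
    by (simp add: FH_def)
  finally show "(G6 *v FH H ((a, b) - dv j)) $ j = of_int c * FH H (a, b) $ j" .
qed

lemma dx_bd: "k < 6 \<Longrightarrow> dx k \<in> {-1..1} \<and> dy k \<in> {-1..1}"
  by (cases k; cases "k - 1"; cases "k - 2"; cases "k - 3"; cases "k - 4"; cases "k - 5";
      auto simp: dx_def dy_def)

definition HA :: "int \<Rightarrow> int \<Rightarrow> nat \<Rightarrow> int" where
  "HA a b k = (if (a,b) = (0,0) then [0,1,0,1,0,1] ! k else if (a,b) = (0,1) then [0,1,1,0,0,1] ! k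
   else if (a,b) = (1,0) then [1,0,0,1,0,1] ! k else if (a,b) = (1,1) then [1,1,1,1,1,1] ! k
   else if (a,b) = (1,2) then [0,1,1,0,1,0] ! k else if (a,b) = (2,1) then [1,0,0,1,1,0] ! k
   else if (a,b) = (2,2) then [1,0,1,0,1,0] ! k else 0)"

definition HB :: "int \<Rightarrow> int \<Rightarrow> nat \<Rightarrow> int" where
  "HB a b k = (if (a,b) = (0,0) then [0,-1,0,-1,0,-1] ! k else if (a,b) = (0,1) then [0,1,1,0,0,1] ! k
   else if (a,b) = (1,0) then [1,0,0,1,0,1] ! k else if (a,b) = (1,1) then [-1,1,-1,1,1,-1] ! k
   else if (a,b) = (1,2) then [0,-1,-1,0,-1,0] ! k else if (a,b) = (2,1) then [-1,0,0,-1,-1,0] ! k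
   else if (a,b) = (2,2) then [1,0,1,0,1,0] ! k else 0)"

lemma HA_out: "\<not> (a \<in> {0..2} \<and> b \<in> {0..2}) \<Longrightarrow> HA a b k = 0"
  by (auto simp: HA_def)
lemma HB_out: "\<not> (a \<in> {0..2} \<and> b \<in> {0..2}) \<Longrightarrow> HB a b k = 0"
  by (auto simp: HB_def)

lemma HA_eig: "k < 6 \<Longrightarrow>
  (let a' = a - dx k; b' = b - dy k in HA a' b' 0 + HA a' b' 1 + HA a' b' 2 + HA a' b' 3 + HA a' b' 4
      + HA a' b' 5 - 3 * HA a' b' k) = 3 * 1 * HA a b k"
proof (cases "a \<in> {-1..3} \<and> b \<in> {-1..3}")
  case True
  assume "k < 6"
  then have "k = 0 \<or> k = 1 \<or> k = 2 \<or> k = 3 \<or> k = 4 \<or> k = 5"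
    and "a = -1 \<or> a = 0 \<or> a = 1 \<or> a = 2 \<or> a = 3"
    and "b = -1 \<or> b = 0 \<or> b = 1 \<or> b = 2 \<or> b = 3" using True by auto
  then show ?thesis by (elim disjE) (simp_all add: HA_def dx_def dy_def Let_def)
next
  case False
  assume k: "k < 6"
  then have "\<not> (a - dx k \<in> {0..2} \<and> b - dy k \<in> {0..2})" using False dx_bd[OF k] by auto
  moreover have "\<not> (a \<in> {0..2} \<and> b \<in> {0..2})" using False by auto
  ultimately show ?thesis by (simp add: HA_out Let_def)
qed

lemma HB_eig: "k < 6 \<Longrightarrow>
  (let a' = a - dx k; b' = b - dy k in HB a' b' 0 + HB a' b' 1 + HB a' b' 2 + HB a' b' 3 + HB a' b' 4
      + HB a' b' 5 - 3 * HB a' b' k) = 3 * (-1) * HB a b k"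
proof (cases "a \<in> {-1..3} \<and> b \<in> {-1..3}")
  case True
  assume "k < 6"
  then have "k = 0 \<or> k = 1 \<or> k = 2 \<or> k = 3 \<or> k = 4 \<or> k = 5"
    and "a = -1 \<or> a = 0 \<or> a = 1 \<or> a = 2 \<or> a = 3"
    and "b = -1 \<or> b = 0 \<or> b = 1 \<or> b = 2 \<or> b = 3" using True by auto
  then show ?thesis by (elim disjE) (simp_all add: HB_def dx_def dy_def Let_def)
next
  case False
  assume k: "k < 6"
  then have "\<not> (a - dx k \<in> {0..2} \<and> b - dy k \<in> {0..2})" using False dx_bd[OF k] by auto
  moreover have "\<not> (a \<in> {0..2} \<and> b \<in> {0..2})" using False by auto
  ultimately show ?thesis by (simp add: HB_out Let_def)
qed

theorem corollary4p2:
  shows "is_eigenvalue (Uop S6 Pfam G6) 1 \<and> is_eigenvalue (Uop S6 Pfam G6) (-1)"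
proof
  show "is_eigenvalue (Uop S6 Pfam G6) 1"
    unfolding is_eigenvalue_def
  proof (intro exI conjI)
    show "l2 (FH HA)" by (rule l2_fin, auto simp: FH_def vec_eq_iff, (metis HA_out atLeastAtMost_iff)+)
    have "FH HA (1,1) $ 1 \<noteq> 0" by (simp add: FH_def HA_def idx_vals)
    then show "FH HA \<noteq> (\<lambda>x. 0)" by auto
    have "Uop S6 Pfam G6 (FH HA) = (\<lambda>x. of_int 1 *s FH HA x)"
      by (rule eig_H) (rule HA_eig)
    then show "Uop S6 Pfam G6 (FH HA) = (\<lambda>x. 1 *s FH HA x)" by simp
  qed
  show "is_eigenvalue (Uop S6 Pfam G6) (-1)"
    unfolding is_eigenvalue_def
  proof (intro exI conjI)
    show "l2 (FH HB)" by (rule l2_fin, auto simp: FH_def vec_eq_iff, (metis HB_out atLeastAtMost_iff)+)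
    have "FH HB (1,1) $ 1 \<noteq> 0" by (simp add: FH_def HB_def idx_vals)
    then show "FH HB \<noteq> (\<lambda>x. 0)" by auto
    have "Uop S6 Pfam G6 (FH HB) = (\<lambda>x. of_int (-1) *s FH HB x)"
      by (rule eig_H) (rule HB_eig)
    then show "Uop S6 Pfam G6 (FH HB) = (\<lambda>x. -1 *s FH HB x)" by simp
  qed
qed

end
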